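(* Let $\gamma_1,\dots,\gamma_B$ be i.i.d. with density $f(\gamma)=\frac{m^m\gamma^{m-1}}{\Gamma(m)}e^{-m\gamma}$, $\gamma\ge0$ ($m>0$), let $\beta>0$ and $0<R\le I_{\mathcal X}(\beta)$. With $I^\beta_{\mathcal X}(\rho)=I_{\mathcal X}(\beta)\mathbf 1\{\rho\ge\beta\}$, there is a constant $\mathcal K_\beta>0$ such that, as $P\to\infty$, \[ \Pr\Big(\frac1B\sum_{b=1}^B I^\beta_{\mathcal X}(P\gamma_b)<R\Big)\doteq \mathcal K_\beta P^{-m\,d_\beta(R)},\qquad d_\beta(R)=1+\Big\lfloor B\Big(1-\frac{R}{I_{\mathcal X}(\beta)}\Big)\Big\rfloor. \]
   Context: $I_{\mathcal X}(\rho)$ is the mutual information (bits) of the AWGN channel with SNR $\rho$ and uniform input on a discrete constellation $\mathcal X$; $I_{\mathcal X}(\beta)>0$. Exponential equality: $f(P)\doteq KP^{-d}$ means $\lim_{P\to\infty}f(P)P^d=K$. *)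

theory Defs
  imports "HOL-Probability.Probability"
begin

definition nakagami_pdf :: "real \<Rightarrow> real \<Rightarrow> real" where
  "nakagami_pdf m g = (if g \<ge> 0 then m powr m * g powr (m - 1) / Gamma m * exp (- m * g) else 0)"

definition nakagami_measure :: "real \<Rightarrow> real measure" where
  "nakagami_measure m = density lborel (\<lambda>g. ennreal (nakagami_pdf m g))"

text \<open>Thresholded mutual information  I^beta(rho) = I(beta) * 1{rho \<ge> beta};
  the argument Ibeta stands for the value I_X(beta) > 0.\<close>
definition thr_MI :: "real \<Rightarrow> real \<Rightarrow> real \<Rightarrow> real" where
  "thr_MI Ibeta beta rho = (if rho \<ge> beta then Ibeta else 0)"

definition outage_prob :: "real \<Rightarrow> nat \<Rightarrow> real \<Rightarrow> real \<Rightarrow> real \<Rightarrow> real \<Rightarrow> real" where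
  "outage_prob m B Ibeta beta R P =
     measure (PiM {..<B} (\<lambda>_. nakagami_measure m))
       {g \<in> space (PiM {..<B} (\<lambda>_. nakagami_measure m)).
          (1 / real B) * (\<Sum>b<B. thr_MI Ibeta beta (P * g b)) < R}"

end

theory Submission
  imports Defs "HOL-Real_Asymp.Real_Asymp"
begin


lemma pdf_nn_int:
  assumes m: "m > 0"
  shows "(\<integral>\<^sup>+x. ennreal (nakagami_pdf m x) \<partial>lborel) = 1"
proof -
  define G where "G x = indicator {0..} x * x powr (m - 1) * exp (- m * x)" for x :: real
  have Gm[measurable]: "G \<in> borel_measurable borel" unfolding G_def by measurable
  define F where "F t = ennreal (indicator {0..} t * t powr (m - 1) / exp t)" for t :: real
  have Fm[measurable]: "F \<in> borel_measurable borel" unfolding F_def by measurable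
  have "ennreal (Gamma m) = (\<integral>\<^sup>+t. F t \<partial>lborel)"
    unfolding F_def using Gamma_conv_nn_integral_real[OF m] by simp
  also have "\<dots> = ennreal \<bar>m\<bar> * (\<integral>\<^sup>+x. F (0 + m * x) \<partial>lborel)"
    using m by (intro nn_integral_real_affine) auto
  also have "(\<lambda>x. F (0 + m * x)) = (\<lambda>x. ennreal (m powr (m - 1)) * ennreal (G x))"
  proof
    fix x
    show "F (0 + m * x) = ennreal (m powr (m - 1)) * ennreal (G x)"
    proof (cases "x \<ge> 0")
      case True
      then show ?thesis using m unfolding F_def G_def
        by (simp add: powr_mult exp_minus field_simps ennreal_mult[symmetric])
    next
      case False
      then have "m * x < 0" using m by (simp add: mult_pos_neg)
      then show ?thesis using False unfolding F_def G_def by (simp add: indicator_def)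
    qed
  qed
  also have "(\<integral>\<^sup>+x. ennreal (m powr (m - 1)) * ennreal (G x) \<partial>lborel) = ennreal (m powr (m - 1)) * (\<integral>\<^sup>+x. ennreal (G x) \<partial>lborel)"
    by (intro nn_integral_cmult) measurable
  finally have 1: "ennreal (Gamma m) = ennreal (m powr m) * (\<integral>\<^sup>+x. ennreal (G x) \<partial>lborel)"
    using m by (simp add: ennreal_mult'[symmetric] mult.assoc[symmetric] powr_diff)
  have "(\<lambda>x. ennreal (nakagami_pdf m x)) = (\<lambda>x. ennreal (m powr m / Gamma m) * ennreal (G x))"
  proof
    fix x show "ennreal (nakagami_pdf m x) = ennreal (m powr m / Gamma m) * ennreal (G x)"
      using m Gamma_real_pos[OF m] unfolding nakagami_pdf_def G_def
      by (auto simp: ennreal_mult[symmetric] indicator_def)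
  qed
  then have "(\<integral>\<^sup>+x. ennreal (nakagami_pdf m x) \<partial>lborel) = ennreal (m powr m / Gamma m) * (\<integral>\<^sup>+x. ennreal (G x) \<partial>lborel)"
    by (simp add: nn_integral_cmult)
  also have "\<dots> = ennreal (1 / Gamma m) * (ennreal (m powr m) * (\<integral>\<^sup>+x. ennreal (G x) \<partial>lborel))"
    using m Gamma_real_pos[OF m] by (simp add: ennreal_mult'[symmetric] mult.assoc[symmetric])
  also have "\<dots> = 1" unfolding 1[symmetric] using Gamma_real_pos[OF m]
    by (simp add: ennreal_mult'[symmetric])
  finally show ?thesis .
qed


lemma nak_prob: assumes m: "m > 0" shows "prob_space (nakagami_measure m)"
proof
  have [measurable]: "(\<lambda>g. ennreal (nakagami_pdf m g)) \<in> borel_measurable borel"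
    unfolding nakagami_pdf_def by measurable
  show "emeasure (nakagami_measure m) (space (nakagami_measure m)) = 1"
    unfolding nakagami_measure_def
    by (simp add: emeasure_density pdf_nn_int[OF m])
qed

lemma nak_space[simp]: "space (nakagami_measure m) = UNIV"
  unfolding nakagami_measure_def by simp

lemma nak_sets[simp]: "sets (nakagami_measure m) = sets borel"
  unfolding nakagami_measure_def by simp

lemma powr_int:
  assumes m: "m > 0" and c: "c \<ge> 0"
  shows "(\<integral>\<^sup>+x. ennreal (indicator {0..c} x * x powr (m - 1)) \<partial>lborel) = ennreal (c powr m / m)"
proof -
  have "((\<lambda>x. x powr (m - 1)) has_integral (c powr (m - 1 + 1) / (m - 1 + 1))) {0..c}"
    using m c by (intro has_integral_powr_from_0) auto
  then show ?thesis using nn_integral_has_integral_lebesgue[of "{0..c}" "\<lambda>x. x powr (m - 1)"]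
    by simp
qed

lemma nak_bounds:
  assumes m: "m > 0" and c: "c > 0"
  shows "m powr m / Gamma m * exp (- m * c) * (c powr m / m) \<le> measure (nakagami_measure m) {..<c}"
    and "measure (nakagami_measure m) {..<c} \<le> m powr m / Gamma m * (c powr m / m)"
proof -
  interpret prob_space "nakagami_measure m" by (rule nak_prob[OF m])
  have [measurable]: "(\<lambda>g. ennreal (nakagami_pdf m g)) \<in> borel_measurable borel"
    unfolding nakagami_pdf_def by measurable
  define C where "C = m powr m / Gamma m"
  have C: "C > 0" unfolding C_def using m Gamma_real_pos[OF m] by simp
  have e: "emeasure (nakagami_measure m) {..<c} = (\<integral>\<^sup>+x. ennreal (nakagami_pdf m x) * indicator {..<c} x \<partial>lborel)"
    unfolding nakagami_measure_def by (subst emeasure_density) auto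
  have "(\<integral>\<^sup>+x. ennreal (nakagami_pdf m x) * indicator {..<c} x \<partial>lborel)
      \<le> (\<integral>\<^sup>+x. ennreal C * ennreal (indicator {0..c} x * x powr (m - 1)) \<partial>lborel)"
  proof (intro nn_integral_mono)
    fix x
    show "ennreal (nakagami_pdf m x) * indicator {..<c} x \<le> ennreal C * ennreal (indicator {0..c} x * x powr (m - 1))"
    proof (cases "0 \<le> x \<and> x < c")
      case True
      have "exp (- m * x) \<le> 1" using True m by (simp add: mult_nonneg_nonneg)
      then have "C * x powr (m - 1) * exp (- m * x) \<le> C * x powr (m - 1)"
        using C by (simp add: mult_left_le)
      then show ?thesis using True Gamma_real_pos[OF m] m unfolding nakagami_pdf_def C_def
        by (auto simp: ennreal_mult[symmetric] indicator_def intro!: ennreal_leI)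
    next
      case False
      then show ?thesis unfolding nakagami_pdf_def by (auto simp: indicator_def)
    qed
  qed
  also have "\<dots> = ennreal C * ennreal (c powr m / m)"
    using m c by (subst nn_integral_cmult) (auto simp: powr_int)
  also have "\<dots> = ennreal (C * (c powr m / m))"
    by (rule ennreal_mult[symmetric]) (use C m in auto)
  finally have up: "emeasure (nakagami_measure m) {..<c} \<le> ennreal (C * (c powr m / m))"
    unfolding e .
  have "ennreal (C * exp (- m * c) * (c powr m / m)) = ennreal (C * exp (- m * c)) * ennreal (c powr m / m)"
    by (rule ennreal_mult) (use C m in auto)
  also have "ennreal (C * exp (- m * c)) * ennreal (c powr m / m) = 
      (\<integral>\<^sup>+x. ennreal (C * exp (- m * c)) * ennreal (indicator {0..c} x * x powr (m - 1)) \<partial>lborel)"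
    using m c by (subst nn_integral_cmult) (auto simp: powr_int)
  also have "\<dots> \<le> (\<integral>\<^sup>+x. ennreal (nakagami_pdf m x) * indicator {..<c} x \<partial>lborel)"
  proof (intro nn_integral_mono_AE)
    show "AE x in lborel. ennreal (C * exp (- m * c)) * ennreal (indicator {0..c} x * x powr (m - 1)) \<le> ennreal (nakagami_pdf m x) * indicator {..<c} x"
      using AE_lborel_singleton[of c]
    proof eventually_elim
      case (elim x)
      show ?case
      proof (cases "0 \<le> x \<and> x < c")
        case True
        have "exp (- m * c) \<le> exp (- m * x)" using True m by simp
        then have "C * exp (- m * c) * x powr (m - 1) \<le> C * x powr (m - 1) * exp (- m * x)"
          using C by (metis mult.assoc mult.commute mult_left_mono less_imp_le powr_ge_zero)
        then show ?thesis using True Gamma_real_pos[OF m] m unfolding nakagami_pdf_def C_def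
          by (auto simp: ennreal_mult[symmetric] indicator_def intro!: ennreal_leI)
      next
        case False
        then show ?thesis using elim by (auto simp: indicator_def)
      qed
    qed
  qed
  finally have lo: "ennreal (C * exp (- m * c) * (c powr m / m)) \<le> emeasure (nakagami_measure m) {..<c}"
    unfolding e .
  show "m powr m / Gamma m * exp (- m * c) * (c powr m / m) \<le> measure (nakagami_measure m) {..<c}"
    using lo unfolding C_def emeasure_eq_measure by (simp add: ennreal_le_iff)
  show "measure (nakagami_measure m) {..<c} \<le> m powr m / Gamma m * (c powr m / m)"
  proof -
    have "0 \<le> C * (c powr m / m)" using C m by simp
    have "measure (nakagami_measure m) {..<c} \<le> C * (c powr m / m)"
      using up unfolding emeasure_eq_measure by (rule ennreal_le_iff[THEN iffD1, rotated]) fact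
    then show ?thesis unfolding C_def .
  qed
qed


lemma cond_iff:
  fixes B n :: nat and Ibeta R :: real
  assumes "B \<ge> 1" "Ibeta > 0" "R \<le> Ibeta" "n \<le> B"
  shows "((1 / real B) * (Ibeta * (real B - real n)) < R) \<longleftrightarrow> nat (\<lfloor>real B * (1 - R / Ibeta)\<rfloor> + 1) \<le> n"
proof -
  have B: "real B > 0" using assms by simp
  have x0: "0 \<le> real B * (1 - R / Ibeta)" using assms by (simp add: field_simps)
  have "((1 / real B) * (Ibeta * (real B - real n)) < R) \<longleftrightarrow> Ibeta * (real B - real n) < R * real B"
    using B by (simp add: field_simps)
  also have "\<dots> \<longleftrightarrow> real B * (1 - R / Ibeta) < real n"
    using assms B by (simp add: field_simps)
  also have "\<dots> \<longleftrightarrow> \<lfloor>real B * (1 - R / Ibeta)\<rfloor> < int n"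
    by (simp add: floor_less_iff)
  also have "\<dots> \<longleftrightarrow> nat (\<lfloor>real B * (1 - R / Ibeta)\<rfloor> + 1) \<le> n"
    using x0 by linarith
  finally show ?thesis .
qed



lemma PiE_char:
  fixes c :: real
  assumes g: "g \<in> PiE {..<B} (\<lambda>b. if b \<in> S then {..<c} else {c..})" and S: "S \<subseteq> {..<B}"
  shows "{b\<in>{..<B}. g b < c} = S"
proof (intro set_eqI iffI)
  fix b assume "b \<in> {b\<in>{..<B}. g b < c}"
  then have b: "b < B" "g b < c" by auto
  have "g b \<in> (if b \<in> S then {..<c} else {c..})" using PiE_mem[OF g] b by auto
  then show "b \<in> S" using b by (auto split: if_splits)
next
  fix b assume b: "b \<in> S"
  then have "b < B" using S by auto
  then have "g b \<in> (if b \<in> S then {..<c} else {c..})" using PiE_mem[OF g] by auto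
  then show "b \<in> {b\<in>{..<B}. g b < c}" using b \<open>b < B\<close> by auto
qed

lemma outage_eq:
  fixes m beta R Ibeta P :: real and B :: nat
  assumes m: "m > 0" and B: "B \<ge> 1" and beta: "beta > 0" and I: "Ibeta > 0"
    and R: "R \<le> Ibeta" and P: "P > 0"
  shows "outage_prob m B Ibeta beta R P =
     (\<Sum>S\<in>{S. S \<subseteq> {..<B} \<and> nat (\<lfloor>real B * (1 - R / Ibeta)\<rfloor> + 1) \<le> card S}.
        measure (nakagami_measure m) {..<beta/P} ^ card S * (1 - measure (nakagami_measure m) {..<beta/P}) ^ (B - card S))"
proof -
  define N where "N = nakagami_measure m"
  define M where "M = PiM {..<B} (\<lambda>_. N)"
  define c where "c = beta / P"
  define d where "d = nat (\<lfloor>real B * (1 - R / Ibeta)\<rfloor> + 1)"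
  define a where "a = measure N {..<c}"
  define Fam where "Fam = {S. S \<subseteq> {..<B} \<and> d \<le> card S}"
  define E where "E S = PiE {..<B} (\<lambda>b. if b \<in> S then {..<c} else {c..})" for S
  interpret N: prob_space N unfolding N_def by (rule nak_prob[OF m])
  interpret M: prob_space M unfolding M_def by (intro prob_space_PiM) (rule N.prob_space_axioms)
  interpret PS: product_sigma_finite "\<lambda>_. N"
    by unfold_locales
  have spM: "space M = PiE {..<B} (\<lambda>_. UNIV)" unfolding M_def N_def by (simp add: space_PiM)
  have thr: "thr_MI Ibeta beta (P * x) = (if c \<le> x then Ibeta else 0)" for x
    unfolding thr_MI_def c_def using P by (simp add: divide_le_eq mult.commute)
  have cnt: "(\<Sum>b<B. thr_MI Ibeta beta (P * g b)) = Ibeta * (real B - real (card {b\<in>{..<B}. g b < c}))" for g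
  proof -
    have "(\<Sum>b<B. thr_MI Ibeta beta (P * g b)) = (\<Sum>b\<in>{b\<in>{..<B}. \<not> g b < c}. Ibeta)"
      unfolding thr by (simp add: sum.If_cases not_less Int_def)
    also have "\<dots> = Ibeta * real (card {b\<in>{..<B}. \<not> g b < c})" by simp
    also have "card {b\<in>{..<B}. \<not> g b < c} = B - card {b\<in>{..<B}. g b < c}"
    proof -
      have "{b\<in>{..<B}. \<not> g b < c} = {..<B} - {b\<in>{..<B}. g b < c}" by auto
      then show ?thesis by (simp only:) (subst card_Diff_subset, auto)
    qed
    also have "real (B - card {b\<in>{..<B}. g b < c}) = real B - real (card {b\<in>{..<B}. g b < c})"
      by (rule of_nat_diff) (rule order_trans[OF card_mono[of "{..<B}"]], auto)
    finally show ?thesis .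
  qed
  have cardle: "card {b\<in>{..<B}. g b < c} \<le> B" for g
    by (rule order_trans[OF card_mono[of "{..<B}"]], auto)
  have seteq: "{g \<in> space M. (1 / real B) * (\<Sum>b<B. thr_MI Ibeta beta (P * g b)) < R} = (\<Union>S\<in>Fam. E S)"
  proof (intro set_eqI iffI)
    fix g assume g: "g \<in> {g \<in> space M. (1 / real B) * (\<Sum>b<B. thr_MI Ibeta beta (P * g b)) < R}"
    then have "d \<le> card {b\<in>{..<B}. g b < c}"
      unfolding cnt d_def using cond_iff[OF B I R cardle] by auto
    then have "{b\<in>{..<B}. g b < c} \<in> Fam" unfolding Fam_def by auto
    moreover have "g \<in> E {b\<in>{..<B}. g b < c}" using g unfolding E_def spM by (auto simp: PiE_iff)
    ultimately show "g \<in> (\<Union>S\<in>Fam. E S)" by blast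
  next
    fix g assume "g \<in> (\<Union>S\<in>Fam. E S)"
    then obtain S where S: "S \<in> Fam" "g \<in> E S" by blast
    have "{b\<in>{..<B}. g b < c} = S" using S unfolding E_def Fam_def by (intro PiE_char) auto
    then have "d \<le> card {b\<in>{..<B}. g b < c}" using S unfolding Fam_def by auto
    then have "(1 / real B) * (\<Sum>b<B. thr_MI Ibeta beta (P * g b)) < R"
      unfolding cnt d_def using cond_iff[OF B I R cardle] by auto
    moreover have "g \<in> space M" using S(2) unfolding E_def spM by (auto simp: PiE_iff)
    ultimately show "g \<in> {g \<in> space M. (1 / real B) * (\<Sum>b<B. thr_MI Ibeta beta (P * g b)) < R}" by blast
  qed
  have finFam: "finite Fam" unfolding Fam_def by (rule finite_subset[of _ "Pow {..<B}"]) auto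
  have Esets: "E S \<in> sets M" for S
    unfolding E_def M_def N_def by (intro sets_PiM_I_finite) auto
  have disj: "disjoint_family_on E Fam"
    unfolding disjoint_family_on_def
  proof (intro ballI impI)
    fix S T assume ST: "S \<in> Fam" "T \<in> Fam" "S \<noteq> T"
    show "E S \<inter> E T = {}"
    proof (rule ccontr)
      assume "E S \<inter> E T \<noteq> {}"
      then obtain g where "g \<in> E S" "g \<in> E T" by blast
      moreover have "S \<subseteq> {..<B}" "T \<subseteq> {..<B}" using ST unfolding Fam_def by auto
      ultimately have "{b\<in>{..<B}. g b < c} = S" "{b\<in>{..<B}. g b < c} = T"
        unfolding E_def using PiE_char by blast+
      then show False using ST by simp
    qed
  qed
  have a01: "0 \<le> a" "a \<le> 1" unfolding a_def by auto
  have mE: "measure M (E S) = a ^ card S * (1 - a) ^ (B - card S)" if S: "S \<in> Fam" for S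
  proof -
    have Ssub: "S \<subseteq> {..<B}" using S unfolding Fam_def by auto
    have "emeasure M (E S) = (\<Prod>b\<in>{..<B}. emeasure N (if b \<in> S then {..<c} else {c..}))"
      unfolding M_def E_def by (intro PS.emeasure_PiM) (auto simp: N_def)
    also have "\<dots> = (\<Prod>b\<in>{..<B}. ennreal (if b \<in> S then a else 1 - a))"
    proof (intro prod.cong refl)
      fix b
      have "{c..} = space N - {..<c}" unfolding N_def by auto
      then have "N.prob {c..} = 1 - a" unfolding a_def
        using N.prob_compl[of "{..<c}"] by (simp add: N_def)
      then show "emeasure N (if b \<in> S then {..<c} else {c..}) = ennreal (if b \<in> S then a else 1 - a)"
        unfolding N.emeasure_eq_measure a_def by auto
    qed
    also have "\<dots> = ennreal (\<Prod>b\<in>{..<B}. (if b \<in> S then a else 1 - a))"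
      using a01 by (intro prod_ennreal) auto
    also have "(\<Prod>b\<in>{..<B}. (if b \<in> S then a else 1 - a)) = a ^ card S * (1 - a) ^ (B - card S)"
    proof -
      have "{..<B} \<inter> {x. x \<in> S} = S" "{..<B} \<inter> - {x. x \<in> S} = {..<B} - S" using Ssub by auto
      moreover have "card ({..<B} - S) = B - card S" using Ssub by (simp add: card_Diff_subset finite_subset)
      ultimately show ?thesis by (simp add: prod.If_cases)
    qed
    finally have "ennreal (measure M (E S)) = ennreal (a ^ card S * (1 - a) ^ (B - card S))"
      unfolding M.emeasure_eq_measure .
    then show ?thesis using a01 by (subst (asm) ennreal_inj) auto
  qed
  have "outage_prob m B Ibeta beta R P = measure M (\<Union>S\<in>Fam. E S)"
    unfolding outage_prob_def M_def[symmetric] N_def[symmetric] seteq[symmetric] by simp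
  also have "\<dots> = (\<Sum>S\<in>Fam. measure M (E S))"
    using finFam Esets disj by (intro measure_finite_Union) auto
  also have "\<dots> = (\<Sum>S\<in>Fam. a ^ card S * (1 - a) ^ (B - card S))"
    by (intro sum.cong refl mE)
  finally show ?thesis unfolding Fam_def d_def a_def N_def c_def .
qed



lemma lim_a:
  fixes m beta :: real
  assumes m: "m > 0" and beta: "beta > 0"
  shows "((\<lambda>P. measure (nakagami_measure m) {..<beta/P} * P powr m) \<longlongrightarrow> m powr m / Gamma m * (beta powr m / m)) at_top"
    and "((\<lambda>P. measure (nakagami_measure m) {..<beta/P}) \<longlongrightarrow> 0) at_top"
proof -
  define L where "L = m powr m / Gamma m * (beta powr m / m)"
  define C where "C = m powr m / Gamma m"
  have C: "C > 0" unfolding C_def using m Gamma_real_pos[OF m] by simp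
  have ev: "eventually (\<lambda>P::real. P > 0) at_top" by (rule eventually_gt_at_top)
  have key: "(beta / P) powr m * P powr m = beta powr m" if P: "P > 0" for P
    using P beta by (simp add: powr_divide)
  have lo: "eventually (\<lambda>P. L * exp (- m * (beta / P)) \<le> measure (nakagami_measure m) {..<beta/P} * P powr m) at_top"
    using ev
  proof eventually_elim
    case (elim P)
    have "C * exp (- m * (beta / P)) * ((beta/P) powr m / m) \<le> measure (nakagami_measure m) {..<beta/P}"
      unfolding C_def using nak_bounds(1)[OF m, of "beta/P"] elim beta by simp
    then have "C * exp (- m * (beta / P)) * ((beta/P) powr m / m) * P powr m \<le> measure (nakagami_measure m) {..<beta/P} * P powr m"
      by (rule mult_right_mono) simp
    also have "C * exp (- m * (beta / P)) * ((beta/P) powr m / m) * P powr m = L * exp (- m * (beta / P))"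
      unfolding L_def C_def using key[OF elim] by (simp add: field_simps)
    finally show ?case .
  qed
  have up: "eventually (\<lambda>P. measure (nakagami_measure m) {..<beta/P} * P powr m \<le> L) at_top"
    using ev
  proof eventually_elim
    case (elim P)
    have "measure (nakagami_measure m) {..<beta/P} \<le> C * ((beta/P) powr m / m)"
      unfolding C_def using nak_bounds(2)[OF m, of "beta/P"] elim beta by simp
    then have "measure (nakagami_measure m) {..<beta/P} * P powr m \<le> C * ((beta/P) powr m / m) * P powr m"
      by (rule mult_right_mono) simp
    also have "C * ((beta/P) powr m / m) * P powr m = L"
      unfolding L_def C_def using key[OF elim] by (simp add: field_simps)
    finally show ?case .
  qed
  have "((\<lambda>P. L * exp (- m * (beta / P))) \<longlongrightarrow> L * exp (- m * 0)) at_top"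
    using m beta by (intro tendsto_intros) real_asymp
  then have l1: "((\<lambda>P. L * exp (- m * (beta / P))) \<longlongrightarrow> L) at_top" by simp
  show "((\<lambda>P. measure (nakagami_measure m) {..<beta/P} * P powr m) \<longlongrightarrow> L) at_top"
    by (rule tendsto_sandwich[OF lo up l1 tendsto_const])
  have up2: "eventually (\<lambda>P. measure (nakagami_measure m) {..<beta/P} \<le> C * ((beta/P) powr m / m)) at_top"
    using ev by eventually_elim (use nak_bounds(2)[OF m] beta in \<open>simp add: C_def\<close>)
  have "((\<lambda>P. C * ((beta/P) powr m / m)) \<longlongrightarrow> 0) at_top"
    using m beta C by real_asymp
  then show "((\<lambda>P. measure (nakagami_measure m) {..<beta/P}) \<longlongrightarrow> 0) at_top"
    by (intro tendsto_sandwich[OF _ up2 tendsto_const]) auto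
qed


theorem mainTheorem6:
  fixes m beta R Ibeta :: real and B :: nat
  assumes "m > 0" and "B \<ge> 1" and "beta > 0"
    and "Ibeta > 0"
    and "0 < R" and "R \<le> Ibeta"
  shows "\<exists>K > 0. ((\<lambda>P. outage_prob m B Ibeta beta R P
             * P powr (m * real_of_int (1 + \<lfloor>real B * (1 - R / Ibeta)\<rfloor>)))
           \<longlongrightarrow> K) at_top"
proof -
  note m = assms(1) and B = assms(2) and beta = assms(3) and I = assms(4) and R0 = assms(5) and R = assms(6)
  define d where "d = nat (\<lfloor>real B * (1 - R / Ibeta)\<rfloor> + 1)"
  define a where "a P = measure (nakagami_measure m) {..<beta/P}" for P
  define L where "L = m powr m / Gamma m * (beta powr m / m)"
  define Fam where "Fam = {S. S \<subseteq> {..<B} \<and> d \<le> card S}"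
  have x0: "0 \<le> real B * (1 - R / Ibeta)" using I R B by (simp add: field_simps)
  have xB: "real B * (1 - R / Ibeta) < real B" using I R0 B by (simp add: field_simps)
  have dB: "d \<le> B" unfolding d_def using xB x0 by linarith
  have d_eq: "real_of_int (1 + \<lfloor>real B * (1 - R / Ibeta)\<rfloor>) = real d"
    unfolding d_def using x0 by simp
  have Lpos: "L > 0" unfolding L_def using m beta Gamma_real_pos[OF m] by simp
  have finFam: "finite Fam" unfolding Fam_def by (rule finite_subset[of _ "Pow {..<B}"]) auto
  define g where "g (S::nat set) (P::real) = (a P * P powr m) ^ d * a P ^ (card S - d) * (1 - a P) ^ (B - card S)" for S P
  have eq: "eventually (\<lambda>P. (\<Sum>S\<in>Fam. g S P) = outage_prob m B Ibeta beta R P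
             * P powr (m * real_of_int (1 + \<lfloor>real B * (1 - R / Ibeta)\<rfloor>))) at_top"
    using eventually_gt_at_top[of "0::real"]
  proof eventually_elim
    case (elim P)
    have pw: "P powr (m * real d) = (P powr m) ^ d"
      using elim by (simp add: powr_powr[symmetric] powr_realpow)
    have oe: "outage_prob m B Ibeta beta R P = (\<Sum>S\<in>Fam. a P ^ card S * (1 - a P) ^ (B - card S))"
      unfolding outage_eq[OF m B beta I R elim] a_def Fam_def d_def ..
    have "outage_prob m B Ibeta beta R P * P powr (m * real d)
        = (\<Sum>S\<in>Fam. a P ^ card S * (1 - a P) ^ (B - card S)) * (P powr m) ^ d"
      unfolding pw oe ..
    also have "\<dots> = (\<Sum>S\<in>Fam. g S P)"
      unfolding sum_distrib_right
    proof (intro sum.cong refl)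
      fix S assume "S \<in> Fam"
      then have "card S = d + (card S - d)" unfolding Fam_def by auto
      then have "a P ^ card S = a P ^ d * a P ^ (card S - d)" by (metis power_add)
      then show "a P ^ card S * (1 - a P) ^ (B - card S) * (P powr m) ^ d = g S P"
        unfolding g_def by (simp add: power_mult_distrib algebra_simps)
    qed
    finally show ?case unfolding d_eq by simp
  qed
  have lims: "((\<lambda>P. g S P) \<longlongrightarrow> L ^ d * 0 ^ (card S - d) * (1 - 0) ^ (B - card S)) at_top" for S
  proof -
    have l1: "((\<lambda>P. a P * P powr m) \<longlongrightarrow> L) at_top" unfolding a_def L_def by (rule lim_a(1)[OF m beta])
    have l2: "((\<lambda>P. a P) \<longlongrightarrow> 0) at_top" unfolding a_def by (rule lim_a(2)[OF m beta])
    show ?thesis unfolding g_def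
      by (rule tendsto_mult[OF tendsto_mult[OF tendsto_power[OF l1] tendsto_power[OF l2]] tendsto_power[OF tendsto_diff[OF tendsto_const l2]]])
  qed
  have "((\<lambda>P. \<Sum>S\<in>Fam. g S P) \<longlongrightarrow> (\<Sum>S\<in>Fam. L ^ d * 0 ^ (card S - d) * (1 - 0) ^ (B - card S))) at_top"
    by (intro tendsto_sum lims)
  also have "(\<Sum>S\<in>Fam. L ^ d * 0 ^ (card S - d) * (1 - 0) ^ (B - card S)) = (\<Sum>S\<in>{S. S \<subseteq> {..<B} \<and> card S = d}. L ^ d)"
  proof -
    have "(\<Sum>S\<in>Fam. L ^ d * 0 ^ (card S - d) * (1 - 0) ^ (B - card S)) = (\<Sum>S\<in>Fam. if card S = d then L ^ d else 0)"
      by (intro sum.cong refl) (auto simp: Fam_def)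
    also have "\<dots> = (\<Sum>S\<in>Fam \<inter> {S. card S = d}. L ^ d)"
      using finFam by (simp add: sum.If_cases)
    also have "Fam \<inter> {S. card S = d} = {S. S \<subseteq> {..<B} \<and> card S = d}" unfolding Fam_def by auto
    finally show ?thesis .
  qed
  also have "\<dots> = L ^ d * real (B choose d)" using n_subsets[of "{..<B}" d] by simp
  finally have lim: "((\<lambda>P. \<Sum>S\<in>Fam. g S P) \<longlongrightarrow> L ^ d * real (B choose d)) at_top" .
  have Kpos: "L ^ d * real (B choose d) > 0" using Lpos dB by simp
  show ?thesis
    using Kpos tendsto_cong[OF eq] lim by blast
qed

end
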